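(* Let $p_1,\dots,p_m$ be complex polynomials and for $z\in\mathbb{D}^*$ let $K_z$ be the semigroup generated by the contractions $f_i:x\mapsto zx+p_i(z)$, $1\le i\le m$. Then there is a regular language $L$ over a finite alphabet of complex numbers such that a power series $e(z)=a_0+a_1z+a_2z^2+\cdots$ is $L$-regular if and only if $e\in\partial K_z$, i.e. $e$ is the function of $z$ given by an infinite composition of the generators $f_i$.
   Context: For a right-infinite sequence $s_1s_2s_3\cdots$ of indices in $\{1,\dots,m\}$, the associated infinite composition is $e(z)=\lim_{n\to\infty}f_{s_1}\circ f_{s_2}\circ\cdots\circ f_{s_n}(x)$, which is independent of $x$ and is a power series in $z$; $\partial K_z$ denotes the set of all such power series. Given a finite alphabet $S\subset\mathbb{C}$ and a prefix-closed regular language $L\subseteq S^*$, let $\overline{L}$ be the set of right-infinite words over $S$ all of whose finite prefixes lie in $L$; a power series $a_0+a_1z+a_2z^2+\cdots$ is called $L$-regular if $(a_0,a_1,a_2,\dots)\in\overline{L}$. *)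

theory Defs
  imports "HOL-Analysis.Analysis" "HOL-Computational_Algebra.Polynomial"
begin

definition gen :: "(nat \<Rightarrow> complex poly) \<Rightarrow> nat \<Rightarrow> complex \<Rightarrow> complex \<Rightarrow> complex" where
  "gen p i z x = z * x + poly (p i) z"

text \<open>Finite composition f_{s 0} o f_{s 1} o ... o f_{s (n-1)} applied to x.\<close>
fun comp_gen :: "(nat \<Rightarrow> complex poly) \<Rightarrow> (nat \<Rightarrow> nat) \<Rightarrow> complex \<Rightarrow> nat \<Rightarrow> complex \<Rightarrow> complex" where
  "comp_gen p s z 0 x = x"
| "comp_gen p s z (Suc n) x = comp_gen p s z n (gen p (s n) z x)"

definition in_boundary_K :: "nat \<Rightarrow> (nat \<Rightarrow> complex poly) \<Rightarrow> (nat \<Rightarrow> complex) \<Rightarrow> bool" where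
  "in_boundary_K m p a \<longleftrightarrow>
     (\<exists>s::nat \<Rightarrow> nat. (\<forall>k. s k \<in> {1..m}) \<and>
        (\<forall>z. 0 < norm z \<and> norm z < 1 \<longrightarrow>
           summable (\<lambda>k. a k * z ^ k) \<and>
           (\<forall>x. (\<lambda>n. comp_gen p s z n x) \<longlonglongrightarrow> (\<Sum>k. a k * z ^ k))))"

definition regular_lang :: "'a list set \<Rightarrow> bool" where
  "regular_lang L \<longleftrightarrow>
     (\<exists>(Q::nat set) (\<delta>::nat \<Rightarrow> 'a \<Rightarrow> nat) q0 F.
        finite Q \<and> q0 \<in> Q \<and> F \<subseteq> Q \<and> (\<forall>q\<in>Q. \<forall>c. \<delta> q c \<in> Q) \<and>
        L = {w. fold (\<lambda>c q. \<delta> q c) w q0 \<in> F})"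

definition prefix_closed :: "'a list set \<Rightarrow> bool" where
  "prefix_closed L \<longleftrightarrow> (\<forall>w\<in>L. \<forall>n. take n w \<in> L)"

definition inf_closure :: "'a list set \<Rightarrow> (nat \<Rightarrow> 'a) set" where
  "inf_closure L = {a. \<forall>n. map a [0..<n] \<in> L}"

definition L_regular :: "'a list set \<Rightarrow> (nat \<Rightarrow> 'a) \<Rightarrow> bool" where
  "L_regular L a \<longleftrightarrow> a \<in> inf_closure L"

end

theory Submission imports Defs "HOL-Complex_Analysis.Complex_Analysis" begin

definition bc :: "(nat \<Rightarrow> complex poly) \<Rightarrow> nat \<Rightarrow> (nat \<Rightarrow> nat) \<Rightarrow> nat \<Rightarrow> complex" where
  "bc p D s n = (\<Sum>j\<le>D. if j \<le> n then coeff (p (s (n - j))) j else 0)"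

lemma comp_gen_formula:
  "comp_gen p s z n x = z^n * x + (\<Sum>k<n. z^k * poly (p (s k)) z)"
  by (induction n arbitrary: x) (simp_all add: gen_def algebra_simps)

lemma poly_D:
  fixes q :: "complex poly"
  assumes "degree q \<le> D"
  shows "poly q z = (\<Sum>j\<le>D. coeff q j * z^j)"
  apply (subst poly_altdef)
  apply (rule sum.mono_neutral_left)
  using assms by (auto intro: le_degree)

lemma analysis_part:
  fixes z :: complex
  assumes valid: "\<forall>k. s k \<in> {1..m}"
    and deg: "\<forall>i\<in>{1..m}. degree (p i) \<le> D"
    and z: "norm z < 1"
  shows "summable (\<lambda>k. bc p D s k * z ^ k) \<and>
         (\<forall>x. (\<lambda>n. comp_gen p s z n x) \<longlonglongrightarrow> (\<Sum>k. bc p D s k * z ^ k))"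
proof -
  define h where "h j k = coeff (p (s k)) j * z^(k+j)" for j k
  have hs: "summable (h j)" for j
  proof (rule summable_comparison_test)
    define B where "B = (\<Sum>i\<in>{1..m}. norm (coeff (p i) j))"
    show "\<exists>N. \<forall>n\<ge>N. norm (h j n) \<le> B * norm z ^ n"
    proof (intro exI allI impI)
      fix n
      have "norm (coeff (p (s n)) j) \<le> B"
        unfolding B_def using valid by (intro member_le_sum) auto
      moreover have "norm z ^ (n + j) \<le> norm z ^ n"
        using z by (intro power_decreasing) auto
      ultimately show "norm (h j n) \<le> B * norm z ^ n"
        unfolding h_def norm_mult norm_power
        by (intro mult_mono) (auto simp: B_def intro: sum_nonneg)
    qed
    show "summable (\<lambda>n. B * norm z ^ n)"
      using z by (intro summable_mult summable_geometric) auto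
  qed
  define T where "T = (\<Sum>j\<le>D. suminf (h j))"
  have g: "(\<lambda>n. if j \<le> n then coeff (p (s (n - j))) j * z^n else 0) sums suminf (h j)" for j
  proof -
    have "(\<lambda>i. (\<lambda>n. if j \<le> n then coeff (p (s (n - j))) j * z^n else 0) (i + j)) = h j"
      by (auto simp: h_def fun_eq_iff)
    then show ?thesis
      using sums_zero_iff_shift[of j "\<lambda>n. if j \<le> n then coeff (p (s (n - j))) j * z^n else 0"]
        summable_sums[OF hs[of j]] by auto
  qed
  have 1: "(\<lambda>k. bc p D s k * z ^ k) sums T"
  proof -
    have "(\<lambda>n. \<Sum>j\<le>D. if j \<le> n then coeff (p (s (n - j))) j * z^n else 0) sums T"
      unfolding T_def by (rule sums_sum) (rule g)
    moreover have "(\<lambda>n. \<Sum>j\<le>D. if j \<le> n then coeff (p (s (n - j))) j * z^n else 0)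
        = (\<lambda>k. bc p D s k * z ^ k)"
      by (auto simp: bc_def sum_distrib_right fun_eq_iff intro!: sum.cong)
    ultimately show ?thesis by simp
  qed
  have 2: "(\<lambda>k. z^k * poly (p (s k)) z) sums T"
  proof -
    have "(\<lambda>k. \<Sum>j\<le>D. h j k) sums T"
      unfolding T_def by (rule sums_sum) (rule summable_sums[OF hs])
    moreover have "(\<lambda>k. \<Sum>j\<le>D. h j k) = (\<lambda>k. z^k * poly (p (s k)) z)"
    proof
      fix k
      have "degree (p (s k)) \<le> D" using valid deg by auto
      then show "(\<Sum>j\<le>D. h j k) = z^k * poly (p (s k)) z"
        by (simp add: poly_D h_def sum_distrib_left power_add algebra_simps)
    qed
    ultimately show ?thesis by simp
  qed
  have "(\<lambda>n. comp_gen p s z n x) \<longlonglongrightarrow> T" for x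
  proof -
    have "(\<lambda>n. z^n * x + (\<Sum>k<n. z^k * poly (p (s k)) z)) \<longlonglongrightarrow> 0 * x + T"
      using 2 unfolding sums_def
      by (intro tendsto_intros) (use z LIMSEQ_power_zero in auto)
    then show ?thesis by (simp add: comp_gen_formula)
  qed
  with 1 show ?thesis by (auto simp: sums_iff)
qed

lemma powser_unique:
  fixes a b :: "nat \<Rightarrow> complex"
  assumes "\<And>z. 0 < norm z \<Longrightarrow> norm z < 1 \<Longrightarrow>
     summable (\<lambda>k. a k * z^k) \<and> summable (\<lambda>k. b k * z^k) \<and> (\<Sum>k. a k * z^k) = (\<Sum>k. b k * z^k)"
  shows "a = b"
proof (rule ccontr)
  assume "a \<noteq> b"
  then obtain k where k: "a k \<noteq> b k" by auto
  define d where "d n = (if n = 0 then 0 else a (n - 1) - b (n - 1))" for n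
  have sm: "(\<lambda>n. d n * (x - 0) ^ n) sums 0" if "norm (x - 0) < 1" for x
  proof (cases "x = 0")
    case True
    then show ?thesis by (simp add: d_def)
  next
    case False
    with that assms[of x] have sa: "summable (\<lambda>k. a k * x^k)" and sb: "summable (\<lambda>k. b k * x^k)"
      and eq: "(\<Sum>k. a k * x^k) = (\<Sum>k. b k * x^k)" by auto
    have "(\<lambda>k. (a k * x^k - b k * x^k) * x) sums (((\<Sum>k. a k * x^k) - (\<Sum>k. b k * x^k)) * x)"
      by (intro sums_mult2 sums_diff summable_sums sa sb)
    then have "(\<lambda>k. (a k * x^k - b k * x^k) * x) sums 0" using eq by simp
    moreover have "(\<lambda>i. d (i + 1) * x ^ (i + 1)) = (\<lambda>k. (a k * x^k - b k * x^k) * x)"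
      by (auto simp: d_def fun_eq_iff algebra_simps)
    ultimately have "(\<lambda>i. d (i + 1) * x ^ (i + 1)) sums 0" by simp
    then show ?thesis
      using sums_zero_iff_shift[of 1 "\<lambda>n. d n * x ^ n" 0] by (simp add: d_def)
  qed
  have dk: "d (Suc k) \<noteq> 0" using k by (simp add: d_def)
  show False
  proof (rule powser_0_nonzero[where a=d and r=1 and \<xi>=0 and f="\<lambda>_. 0" and m="Suc k", OF _ sm _ dk])
    fix r :: real assume r: "0 < r" and nz: "\<And>z::complex. z \<in> cball 0 r - {0} \<Longrightarrow> (0::complex) \<noteq> 0"
    have "complex_of_real r \<in> cball 0 r - {0}" using r by auto
    from nz[OF this] show False by simp
  qed auto
qed


definition valid :: "nat \<Rightarrow> (nat \<Rightarrow> nat) \<Rightarrow> bool" where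
  "valid m s \<longleftrightarrow> (\<forall>k. s k \<in> {1..m})"

lemma bc_cong: "(\<And>j. j \<le> n \<Longrightarrow> s j = t j) \<Longrightarrow> bc p D s n = bc p D t n"
  unfolding bc_def by (intro sum.cong) auto

lemma boundary_iff:
  assumes deg: "\<forall>i\<in>{1..m}. degree (p i) \<le> D"
  shows "in_boundary_K m p a \<longleftrightarrow> (\<exists>s. valid m s \<and> a = bc p D s)"
proof
  assume "in_boundary_K m p a"
  then obtain s where sv: "\<forall>k. s k \<in> {1..m}" and
    H: "\<forall>z. 0 < norm z \<and> norm z < 1 \<longrightarrow>
           summable (\<lambda>k. a k * z ^ k) \<and>
           (\<forall>x. (\<lambda>n. comp_gen p s z n x) \<longlonglongrightarrow> (\<Sum>k. a k * z ^ k))"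
    unfolding in_boundary_K_def by blast
  have "a = bc p D s"
  proof (rule powser_unique)
    fix z :: complex assume z: "0 < norm z" "norm z < 1"
    from analysis_part[OF sv deg z(2)] H z
    show "summable (\<lambda>k. a k * z^k) \<and> summable (\<lambda>k. bc p D s k * z^k) \<and>
          (\<Sum>k. a k * z^k) = (\<Sum>k. bc p D s k * z^k)"
      using LIMSEQ_unique by blast
  qed
  with sv show "\<exists>s. valid m s \<and> a = bc p D s" unfolding valid_def by blast
next
  assume "\<exists>s. valid m s \<and> a = bc p D s"
  then obtain s where sv: "\<forall>k. s k \<in> {1..m}" and a: "a = bc p D s"
    unfolding valid_def by blast
  show "in_boundary_K m p a"
    unfolding in_boundary_K_def a by (intro exI[of _ s]) (use analysis_part[OF sv deg] sv in auto)
qed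

lemma koenig:
  assumes H: "\<forall>n. \<exists>s. valid m s \<and> (\<forall>k<n. a k = bc p D s k)"
  shows "\<exists>s. valid m s \<and> (\<forall>k. a k = bc p D s k)"
proof -
  define good where "good u \<longleftrightarrow> (\<forall>N. \<exists>s. valid m s \<and> (\<forall>k<length u. s k = u!k) \<and> (\<forall>k<N. a k = bc p D s k))" for u
  have step: "\<exists>i\<in>{1..m}. good (u @ [i])" if gu: "good u" for u
  proof (rule ccontr)
    assume "\<not> ?thesis"
    then have "\<forall>i\<in>{1..m}. \<exists>N. \<not> (\<exists>s. valid m s \<and> (\<forall>k<length (u@[i]). s k = (u@[i])!k) \<and> (\<forall>k<N. a k = bc p D s k))"
      unfolding good_def by blast
    then obtain NN where NN: "\<And>i. i \<in> {1..m} \<Longrightarrow> \<not> (\<exists>s. valid m s \<and> (\<forall>k<length (u@[i]). s k = (u@[i])!k) \<and> (\<forall>k<NN i. a k = bc p D s k))"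
      by metis
    define M where "M = Max (NN ` {1..m})"
    from gu obtain s where sv: "valid m s" and su: "\<forall>k<length u. s k = u!k" and sa: "\<forall>k<M. a k = bc p D s k"
      unfolding good_def by blast
    define i where "i = s (length u)"
    have i: "i \<in> {1..m}" using sv unfolding valid_def i_def by blast
    have "NN i \<le> M" unfolding M_def using i by (intro Max_ge) auto
    moreover have "\<forall>k<length (u@[i]). s k = (u@[i])!k"
      using su by (auto simp: nth_append i_def less_Suc_eq)
    ultimately have "\<forall>k<NN i. a k = bc p D s k" "\<forall>k<length (u@[i]). s k = (u@[i])!k"
      using sa by auto
    with NN[OF i] sv show False by blast
  qed
  define U where "U = rec_nat [] (\<lambda>n u. u @ [SOME i. i \<in> {1..m} \<and> good (u @ [i])])"
  have U0: "U 0 = []" and US: "U (Suc n) = U n @ [SOME i. i \<in> {1..m} \<and> good (U n @ [i])]" for n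
    unfolding U_def by simp_all
  define s where "s n = (SOME i. i \<in> {1..m} \<and> good (U n @ [i]))" for n
  have gU: "good (U n)" for n
  proof (induction n)
    case 0
    then show ?case using H unfolding good_def U0 by simp
  next
    case (Suc n)
    from step[OF Suc] have "\<exists>i. i \<in> {1..m} \<and> good (U n @ [i])" by blast
    from someI_ex[OF this] show ?case unfolding US by blast
  qed
  have sgood: "s n \<in> {1..m}" for n
  proof -
    from step[OF gU[of n]] have "\<exists>i. i \<in> {1..m} \<and> good (U n @ [i])" by blast
    from someI_ex[OF this] show ?thesis unfolding s_def by blast
  qed
  have Um: "U n = map s [0..<n]" for n
    by (induction n) (simp_all add: U0 US s_def)
  have sv: "valid m s" using sgood unfolding valid_def by blast
  have "a k = bc p D s k" for k
  proof -
    from gU[of "Suc k"] obtain t where t1: "\<forall>j<length (U (Suc k)). t j = U (Suc k) ! j"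
      and t2: "\<forall>j<Suc k. a j = bc p D t j"
      unfolding good_def by blast
    have "t j = s j" if "j \<le> k" for j
      using t1 that unfolding Um by (simp del: upt_Suc add: nth_map_upt)
    moreover have "a k = bc p D t k" using t2 by simp
    ultimately show ?thesis using bc_cong[of k t s p D] by simp
  qed
  with sv show ?thesis by blast
qed


definition val :: "(nat \<Rightarrow> complex poly) \<Rightarrow> nat list \<Rightarrow> complex" where
  "val p v = (\<Sum>j<length v. coeff (p (v ! (length v - Suc j))) j)"

definition win :: "nat \<Rightarrow> (nat \<Rightarrow> nat) \<Rightarrow> nat \<Rightarrow> nat list" where
  "win D s n = map s [n - min n D..<n]"

definition lastD :: "nat \<Rightarrow> nat list \<Rightarrow> nat list" where
  "lastD D v = drop (length v - D) v"

lemma F1: "win D s n @ [s n] = map s [n - min n D..<Suc n]"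
  unfolding win_def by simp

lemma F2: "val p (map s [n - min n D..<Suc n]) = bc p D s n"
proof -
  have "bc p D s n = (\<Sum>j \<in> {j\<in>{..D}. j \<le> n}. coeff (p (s (n-j))) j)"
    unfolding bc_def by (subst sum.inter_filter) auto
  also have "{j\<in>{..D}. j \<le> n} = {..<Suc (min n D)}" by (auto simp: less_Suc_eq_le)
  also have "(\<Sum>j<Suc (min n D). coeff (p (s (n-j))) j) = val p (map s [n - min n D..<Suc n])"
  proof -
    have len: "length (map s [n - min n D..<Suc n]) = Suc (min n D)" by simp
    show ?thesis unfolding val_def len
    proof (rule sum.cong)
      fix j assume "j \<in> {..<Suc (min n D)}"
      then have j: "j \<le> min n D" by (simp add: less_Suc_eq_le)
      have "map s [n - min n D..<Suc n] ! (Suc (min n D) - Suc j) = s (n - min n D + (min n D - j))"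
        using j by (subst nth_map_upt) auto
      also have "n - min n D + (min n D - j) = n - j" using j by auto
      finally show "coeff (p (s (n - j))) j = coeff (p (map s [n - min n D..<Suc n] ! (Suc (min n D) - Suc j))) j"
        by simp
    qed simp
  qed
  finally show ?thesis by simp
qed

lemma F3: "lastD D (map s [n - min n D..<Suc n]) = win D s (Suc n)"
proof -
  have "lastD D (map s [n - min n D..<Suc n]) = map s [n - min n D + (Suc (min n D) - D)..<Suc n]"
    unfolding lastD_def by (simp add: drop_map)
  also have "n - min n D + (Suc (min n D) - D) = Suc n - min (Suc n) D" by auto
  finally show ?thesis unfolding win_def .
qed

definition Lang :: "nat \<Rightarrow> (nat \<Rightarrow> complex poly) \<Rightarrow> nat \<Rightarrow> complex list set" where
  "Lang m p D = {w. \<exists>s. valid m s \<and> w = map (bc p D s) [0..<length w]}"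

definition W :: "nat \<Rightarrow> (nat \<Rightarrow> complex poly) \<Rightarrow> nat \<Rightarrow> complex list \<Rightarrow> nat list set" where
  "W m p D w = {win D s (length w) | s. valid m s \<and> w = map (bc p D s) [0..<length w]}"

definition dl :: "nat \<Rightarrow> (nat \<Rightarrow> complex poly) \<Rightarrow> nat \<Rightarrow> nat list set \<Rightarrow> complex \<Rightarrow> nat list set" where
  "dl m p D X c = {lastD D (u @ [i]) | u i. u \<in> X \<and> i \<in> {1..m} \<and> c = val p (u @ [i])}"

lemma F4: "(w @ [c] = map (bc p D s) [0..<Suc (length w)]) \<longleftrightarrow>
    (w = map (bc p D s) [0..<length w] \<and> c = bc p D s (length w))"
  by auto

lemma W_snoc: "W m p D (w @ [c]) = dl m p D (W m p D w) c"
proof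
  show "W m p D (w @ [c]) \<subseteq> dl m p D (W m p D w) c"
  proof
    fix x assume "x \<in> W m p D (w @ [c])"
    then obtain s where sv: "valid m s" and cons: "w @ [c] = map (bc p D s) [0..<Suc (length w)]"
      and x: "x = win D s (Suc (length w))"
      unfolding W_def by auto
    define n where "n = length w"
    from cons have c1: "w = map (bc p D s) [0..<n]" and c2: "c = bc p D s n"
      unfolding F4 n_def by auto
    have u: "win D s n \<in> W m p D w" unfolding W_def n_def using sv c1 n_def by auto
    have i: "s n \<in> {1..m}" using sv unfolding valid_def by blast
    have "c = val p (win D s n @ [s n])" unfolding F1 F2 c2 ..
    moreover have "x = lastD D (win D s n @ [s n])" unfolding F1 F3 x n_def ..
    ultimately show "x \<in> dl m p D (W m p D w) c" unfolding dl_def using u i by blast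
  qed
next
  show "dl m p D (W m p D w) c \<subseteq> W m p D (w @ [c])"
  proof
    fix x assume "x \<in> dl m p D (W m p D w) c"
    then obtain u i where u: "u \<in> W m p D w" and i: "i \<in> {1..m}" and c: "c = val p (u @ [i])"
      and x: "x = lastD D (u @ [i])"
      unfolding dl_def by blast
    define n where "n = length w"
    from u obtain s where sv: "valid m s" and c1: "w = map (bc p D s) [0..<n]" and uw: "u = win D s n"
      unfolding W_def n_def by auto
    define t where "t = s(n := i)"
    have tv: "valid m t" using sv i unfolding valid_def t_def by auto
    have "bc p D t k = bc p D s k" if "k < n" for k
      by (rule bc_cong) (use that in \<open>auto simp: t_def\<close>)
    then have c1': "w = map (bc p D t) [0..<n]" using c1 by simp
    have "win D t n = win D s n" unfolding win_def t_def by auto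
    then have ut: "u @ [i] = win D t n @ [t n]" using uw by (simp add: t_def)
    have c2: "c = bc p D t n" using c unfolding ut F1 F2 .
    have "x = win D t (Suc n)" using x unfolding ut F1 F3 .
    moreover have "w @ [c] = map (bc p D t) [0..<Suc (length w)]"
      unfolding F4 using c1' c2 n_def by simp
    ultimately show "x \<in> W m p D (w @ [c])" unfolding W_def using tv by (auto simp: n_def)
  qed
qed

lemma fold_W: "fold (\<lambda>c q. dl m p D q c) w (W m p D []) = W m p D w"
  by (induction w rule: rev_induct) (simp_all add: W_snoc)

lemma Lang_W: "w \<in> Lang m p D \<longleftrightarrow> W m p D w \<noteq> {}"
  unfolding Lang_def W_def by auto

lemma regular_lang_I:
  fixes Q :: "'s set" and \<delta> :: "'s \<Rightarrow> 'a \<Rightarrow> 's"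
  assumes "finite Q" "q0 \<in> Q" "F \<subseteq> Q" "\<forall>q\<in>Q. \<forall>c. \<delta> q c \<in> Q"
    and L: "L = {w. fold (\<lambda>c q. \<delta> q c) w q0 \<in> F}"
  shows "regular_lang L"
proof -
  obtain f where f: "bij_betw f Q {0..<card Q}" using ex_bij_betw_finite_nat[OF assms(1)] by blast
  have inj: "inj_on f Q" using f bij_betw_def by blast
  define g where "g = inv_into Q f"
  have gf: "g (f q) = q" if "q \<in> Q" for q unfolding g_def using inj that by simp
  define \<delta>' where "\<delta>' n c = f (\<delta> (g n) c)" for n c
  have inQ: "fold (\<lambda>c q. \<delta> q c) w q \<in> Q" if "q \<in> Q" for w q
    using that assms(4) by (induction w arbitrary: q) auto
  have fo: "fold (\<lambda>c q. \<delta>' q c) w (f q) = f (fold (\<lambda>c q. \<delta> q c) w q)" if "q \<in> Q" for w q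
    using that
  proof (induction w arbitrary: q)
    case Nil then show ?case by simp
  next
    case (Cons c w)
    have "\<delta> q c \<in> Q" using Cons.prems assms(4) by blast
    then show ?case using Cons by (simp add: \<delta>'_def gf)
  qed
  show ?thesis unfolding regular_lang_def
  proof (intro exI conjI)
    show "finite (f ` Q)" using assms(1) by simp
    show "f q0 \<in> f ` Q" using assms(2) by simp
    show "f ` F \<subseteq> f ` Q" using assms(3) by auto
    show "\<forall>q\<in>f ` Q. \<forall>c. \<delta>' q c \<in> f ` Q" using assms(4) gf unfolding \<delta>'_def by auto
    show "L = {w. fold (\<lambda>c q. \<delta>' q c) w (f q0) \<in> f ` F}"
      unfolding L fo[OF assms(2)] using inj inQ[OF assms(2)] assms(3)
      by (auto simp: inj_on_image_mem_iff)
  qed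
qed


theorem proposition4p3p2:
  fixes m :: nat and p :: "nat \<Rightarrow> complex poly"
  shows "\<exists>(S::complex set) (L::complex list set).
           finite S \<and> L \<subseteq> lists S \<and> regular_lang L \<and> prefix_closed L \<and>
           (\<forall>a::nat \<Rightarrow> complex. L_regular L a \<longleftrightarrow> in_boundary_K m p a)"
proof -
  define D where "D = (\<Sum>i\<in>{1..m}. degree (p i))"
  have deg: "\<forall>i\<in>{1..m}. degree (p i) \<le> D"
    unfolding D_def by (auto intro: member_le_sum)
  define S where "S = val p ` {v. set v \<subseteq> {1..m} \<and> length v \<le> Suc D}"
  define L where "L = Lang m p D"
  have fS: "finite S" unfolding S_def by (intro finite_imageI finite_lists_length_le) auto
  have LS: "L \<subseteq> lists S"
  proof
    fix w assume "w \<in> L"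
    then obtain s where sv: "valid m s" and w: "w = map (bc p D s) [0..<length w]"
      unfolding L_def Lang_def by blast
    have "bc p D s k \<in> S" for k
    proof -
      have "bc p D s k = val p (map s [k - min k D..<Suc k])" by (rule F2[symmetric])
      moreover have "set (map s [k - min k D..<Suc k]) \<subseteq> {1..m}"
        using sv unfolding valid_def by auto
      moreover have "length (map s [k - min k D..<Suc k]) \<le> Suc D" by simp
      ultimately show ?thesis unfolding S_def by blast
    qed
    then show "w \<in> lists S" by (subst w) auto
  qed
  define Q where "Q = Pow {u. set u \<subseteq> {1..m} \<and> length u \<le> D}"
  have WQ: "W m p D w \<in> Q" for w
    unfolding Q_def W_def win_def valid_def by auto
  have dQ: "\<forall>q\<in>Q. \<forall>c. dl m p D q c \<in> Q"
  proof (intro ballI allI)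
    fix X c assume X: "X \<in> Q"
    have H: "set (lastD D (u @ [i])) \<subseteq> {1..m} \<and> length (lastD D (u @ [i])) \<le> D"
      if "u \<in> X" "i \<in> {1..m}" for u i
    proof -
      have "set (u @ [i]) \<subseteq> {1..m}" using X that unfolding Q_def by auto
      then show ?thesis
        unfolding lastD_def using set_drop_subset by fastforce
    qed
    show "dl m p D X c \<in> Q"
      unfolding Q_def dl_def using H by blast
  qed
  have fQ: "finite Q" unfolding Q_def by (intro finite_Pow_iff[THEN iffD2] finite_lists_length_le) auto
  have LF: "L = {w. fold (\<lambda>c q. dl m p D q c) w (W m p D []) \<in> {X\<in>Q. X \<noteq> {}}}"
    unfolding L_def fold_W using Lang_W WQ by auto
  have reg: "regular_lang L"
    by (rule regular_lang_I[OF fQ WQ _ dQ LF]) auto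
  have pc: "prefix_closed L"
    unfolding prefix_closed_def L_def Lang_def
  proof (intro ballI allI)
    fix w n assume "w \<in> {w. \<exists>s. valid m s \<and> w = map (bc p D s) [0..<length w]}"
    then obtain s where sv: "valid m s" and w: "w = map (bc p D s) [0..<length w]" by blast
    have "take n w = map (bc p D s) [0..<length (take n w)]"
      by (subst w) (simp add: take_map min_def)
    with sv show "take n w \<in> {w. \<exists>s. valid m s \<and> w = map (bc p D s) [0..<length w]}" by blast
  qed
  have main: "L_regular L a \<longleftrightarrow> in_boundary_K m p a" for a
  proof -
    have "L_regular L a \<longleftrightarrow> (\<forall>n. \<exists>s. valid m s \<and> (\<forall>k<n. a k = bc p D s k))"
      unfolding L_regular_def inf_closure_def L_def Lang_def
      by (simp add: map_eq_conv atLeast0LessThan Ball_def)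
    also have "\<dots> \<longleftrightarrow> (\<exists>s. valid m s \<and> a = bc p D s)"
    proof
      assume "\<forall>n. \<exists>s. valid m s \<and> (\<forall>k<n. a k = bc p D s k)"
      from koenig[OF this] show "\<exists>s. valid m s \<and> a = bc p D s" by auto
    next
      assume "\<exists>s. valid m s \<and> a = bc p D s"
      then show "\<forall>n. \<exists>s. valid m s \<and> (\<forall>k<n. a k = bc p D s k)" by auto
    qed
    also have "\<dots> \<longleftrightarrow> in_boundary_K m p a" using boundary_iff[OF deg] by simp
    finally show ?thesis .
  qed
  show ?thesis using fS LS reg pc main by blast
qed

end
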